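(* Let $\mathcal{P}$ be a finite poset with $p$ elements. The order cone $\mathcal{C}(\mathcal{P})\subset\mathbb{R}^{\mathcal{P}}\cong\mathbb{R}^p$ is simplicial if and only if the Hasse diagram of $\mathcal{P}$ does not contain any collider.
   Context: For a finite poset $\mathcal{P}$, $\mathbb{R}^{\mathcal{P}}$ is the space of real functions on $\mathcal{P}$. The order cone $\mathcal{C}(\mathcal{P})$ is the set of all $\mathbf{f}\in\mathbb{R}^{\mathcal{P}}$ with $f_x\ge 0$ for all $x\in\mathcal{P}$ and $f_x\le f_y$ whenever $x\preceq y$. An element $y$ covers $x$, written $x\lessdot y$, if $x\prec y$ and there is no $z$ with $x\prec z\prec y$. The Hasse diagram of $\mathcal{P}$ is the directed graph on $\mathcal{P}$ with an edge $x\to y$ iff $x\lessdot y$. A collider is a set of three distinct elements $a,b,c$ with $a\lessdot c$ and $b\lessdot c$. A cone in $\mathbb{R}^p$ is simplicial if it is the conical hull of $p$ linearly independent vectors. *)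

theory Defs
  imports "HOL-Analysis.Analysis"
begin

text \<open>The finite poset P is modelled as a finite type with a partial order;
  R^P is modelled as real^'a.\<close>

definition order_cone :: "(real^'a::{finite,order}) set" where
  "order_cone = {f. (\<forall>x. 0 \<le> f $ x) \<and> (\<forall>x y. x \<le> y \<longrightarrow> f $ x \<le> f $ y)}"

definition covers :: "'a::order \<Rightarrow> 'a \<Rightarrow> bool" where
  "covers x y \<longleftrightarrow> x < y \<and> \<not> (\<exists>z. x < z \<and> z < y)"

definition has_collider :: "'a::order itself \<Rightarrow> bool" where
  "has_collider _ \<longleftrightarrow> (\<exists>a b c::'a. a \<noteq> b \<and> a \<noteq> c \<and> b \<noteq> c \<and> covers a c \<and> covers b c)"

definition conical_hull :: "'v::real_vector set \<Rightarrow> 'v set" where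
  "conical_hull V = {\<Sum>v\<in>V. c v *\<^sub>R v | c. \<forall>v\<in>V. 0 \<le> c v}"

definition simplicial :: "'v::euclidean_space set \<Rightarrow> bool" where
  "simplicial C \<longleftrightarrow> (\<exists>V. finite V \<and> card V = DIM('v) \<and> independent V \<and> C = conical_hull V)"

end

theory Submission
  imports Defs
begin

definition ind :: "'a::finite set \<Rightarrow> real^'a" where
  "ind U = (\<chi> u. if u \<in> U then 1 else 0)"

lemma finite_order_induct:
  fixes P :: "'a::{finite,order} \<Rightarrow> bool"
  assumes "\<And>x. (\<And>y. y < x \<Longrightarrow> P y) \<Longrightarrow> P x"
  shows "P x"
proof (induction x rule: measure_induct_rule[of "\<lambda>x. card {y::'a. y < x}"])
  case (less x)
  show ?case
  proof (rule assms)
    fix y assume "y < x"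
    have "{z. z < y} \<subset> {z. z < x}" using \<open>y < x\<close> by auto
    then have "card {z. z < y} < card {z. z < x}" by (rule psubset_card_mono[rotated]) simp
    then show "P y" using less by blast
  qed
qed

lemma lower_cover_exists:
  fixes x y :: "'a::{finite,order}"
  assumes "x < y"
  shows "\<exists>q. x \<le> q \<and> covers q y"
proof -
  have "finite {w. x \<le> w \<and> w < y}" by simp
  moreover have "x \<in> {w. x \<le> w \<and> w < y}" using assms by simp
  ultimately obtain m where m: "m \<in> {w. x \<le> w \<and> w < y}"
    "\<forall>b\<in>{w. x \<le> w \<and> w < y}. m \<le> b \<longrightarrow> m = b"
    using finite_has_maximal2 by blast
  have "covers m y"
    unfolding covers_def
  proof (intro conjI notI)
    show "m < y" using m by simp
    assume "\<exists>z. m < z \<and> z < y"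
    then obtain z where "m < z" "z < y" by blast
    then have "z \<in> {w. x \<le> w \<and> w < y}" using m by auto
    then show False using m \<open>m < z\<close> by auto
  qed
  then show ?thesis using m by blast
qed

lemma cover_unique:
  fixes p q y :: "'a::{finite,order}"
  assumes "\<not> has_collider TYPE('a)" "covers p y" "covers q y"
  shows "p = q"
proof (rule ccontr)
  assume "p \<noteq> q"
  moreover have "p \<noteq> y" "q \<noteq> y" using assms(2,3) unfolding covers_def by auto
  ultimately have "has_collider TYPE('a)" unfolding has_collider_def using assms(2,3) by blast
  then show False using assms(1) by simp
qed

lemma ind_in_cone:
  fixes U :: "'a::{finite,order} set"
  assumes "\<And>u v. u \<in> U \<Longrightarrow> u \<le> v \<Longrightarrow> v \<in> U"
  shows "ind U \<in> order_cone"
  using assms unfolding order_cone_def ind_def by auto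

lemma extreme_aux:
  fixes y z :: "real^'a::{finite,order}"
  assumes "y \<in> order_cone" "z \<in> order_cone" "y + z = ind U"
  shows "u \<in> U \<Longrightarrow> u' \<in> U \<Longrightarrow> u \<le> u' \<Longrightarrow> y $ u = y $ u'"
    and "u \<notin> U \<Longrightarrow> y $ u = 0"
proof -
  have e: "y $ w + z $ w = (if w \<in> U then 1 else 0)" for w
    using arg_cong[OF assms(3), of "\<lambda>f. f $ w"] unfolding ind_def by simp
  show "u \<in> U \<Longrightarrow> u' \<in> U \<Longrightarrow> u \<le> u' \<Longrightarrow> y $ u = y $ u'"
  proof -
    assume "u \<in> U" "u' \<in> U" "u \<le> u'"
    moreover have "y $ u \<le> y $ u'" "z $ u \<le> z $ u'"
      using assms(1,2) \<open>u \<le> u'\<close> unfolding order_cone_def by auto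
    ultimately show ?thesis using e[of u] e[of u'] by simp
  qed
  show "u \<notin> U \<Longrightarrow> y $ u = 0"
  proof -
    assume "u \<notin> U"
    moreover have "y $ u \<ge> 0" "z $ u \<ge> 0" using assms(1,2) unfolding order_cone_def by auto
    ultimately show ?thesis using e[of u] by simp
  qed
qed

definition up :: "'a::{finite,order} \<Rightarrow> real^('a::{finite,order})" where
  "up x = (\<chi> u. if x \<le> u then 1 else 0)"

lemma inj_up: "inj up"
proof
  fix x y :: 'a assume "up x = up y"
  then have "up x $ x = up y $ x" "up x $ y = up y $ y" by simp_all
  then show "x = y" unfolding up_def by (auto split: if_splits)
qed

lemma up_sum_component:
  fixes c :: "'a::{finite,order} \<Rightarrow> real"
  shows "(\<Sum>x\<in>UNIV. c x *\<^sub>R up x) $ y = (\<Sum>x\<in>{x. x \<le> y}. c x)"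
proof -
  have "(\<Sum>x\<in>UNIV. c x *\<^sub>R up x) $ y = (\<Sum>x\<in>UNIV. if x \<le> y then c x else 0)"
    unfolding sum_component up_def by (intro sum.cong) auto
  also have "\<dots> = (\<Sum>x\<in>{x\<in>UNIV. x \<le> y}. c x)" by (rule sum.inter_filter[symmetric]) simp
  finally show ?thesis by simp
qed

lemma up_independent: "independent (range (up :: 'a::{finite,order} \<Rightarrow> real^('a::{finite,order})))"
proof (rule independent_if_scalars_zero)
  show "finite (range (up :: 'a \<Rightarrow> real^('a::{finite,order})))" by simp
  fix f :: "real^('a::{finite,order}) \<Rightarrow> real" and v
  assume s: "(\<Sum>x\<in>range up. f x *\<^sub>R x) = 0" and v: "v \<in> range (up :: 'a \<Rightarrow> real^('a::{finite,order}))"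
  have s2: "(\<Sum>x\<in>UNIV. f (up x) *\<^sub>R up x) = (0::real^('a::{finite,order}))"
    using s by (simp add: sum.reindex[OF inj_up])
  have "f (up x) = 0" for x :: 'a
  proof (induction x rule: finite_order_induct)
    case (1 x)
    have "0 = (\<Sum>w\<in>UNIV. f (up w) *\<^sub>R up w) $ x" using s2 by simp
    also have "\<dots> = (\<Sum>w\<in>{w. w \<le> x}. f (up w))" by (rule up_sum_component)
    also have "\<dots> = (\<Sum>w\<in>{w. w \<le> x}. if w = x then f (up x) else 0)"
      by (intro sum.cong) (auto simp: 1 order.order_iff_strict)
    also have "\<dots> = f (up x)" by simp
    finally show ?case by simp
  qed
  then show "f v = 0" using v by auto
qed

lemma cone_forward:
  assumes nc: "\<not> has_collider TYPE('a::{finite,order})"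
  shows "(order_cone :: (real^('a::{finite,order})) set) = conical_hull (range up)"
proof
  show "conical_hull (range up) \<subseteq> (order_cone :: (real^('a::{finite,order})) set)"
  proof
    fix f :: "real^('a::{finite,order})" assume "f \<in> conical_hull (range up)"
    then obtain c where f: "f = (\<Sum>v\<in>range up. c v *\<^sub>R v)" and c: "\<forall>v\<in>range up. 0 \<le> c v"
      unfolding conical_hull_def by blast
    have f2: "f = (\<Sum>x\<in>UNIV. c (up x) *\<^sub>R up x)"
      using f by (simp add: sum.reindex[OF inj_up])
    have comp: "f $ y = (\<Sum>x\<in>{x. x \<le> y}. c (up x))" for y
      unfolding f2 by (rule up_sum_component)
    show "f \<in> order_cone"
      unfolding order_cone_def
    proof (intro CollectI conjI allI impI)
      fix x show "0 \<le> f $ x" unfolding comp using c by (intro sum_nonneg) auto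
    next
      fix x y :: 'a assume "x \<le> y"
      then have "{w. w \<le> x} \<subseteq> {w. w \<le> y}" by auto
      then show "f $ x \<le> f $ y" unfolding comp using c by (intro sum_mono2) auto
    qed
  qed
next
  show "(order_cone :: (real^('a::{finite,order})) set) \<subseteq> conical_hull (range up)"
  proof
    fix f :: "real^('a::{finite,order})" assume f: "f \<in> order_cone"
    define par where "par x = (SOME z. covers z x)" for x :: 'a
    define coef where "coef x = (if \<exists>z. covers z x then f $ x - f $ par x else f $ x)" for x
    have parc: "covers (par x) x" if "\<exists>z. covers z x" for x
      unfolding par_def using that by (rule someI_ex)
    have coef_nn: "0 \<le> coef x" for x
    proof (cases "\<exists>z. covers z x")
      case True
      then have "par x \<le> x" using parc[OF True] unfolding covers_def by auto
      then show ?thesis using f True unfolding coef_def order_cone_def by auto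
    next
      case False then show ?thesis using f unfolding coef_def order_cone_def by auto
    qed
    have key: "(\<Sum>x\<in>{x. x \<le> y}. coef x) = f $ y" for y
    proof (induction y rule: finite_order_induct)
      case (1 y)
      show ?case
      proof (cases "\<exists>z. covers z y")
        case False
        have "{x. x \<le> y} = {y}"
        proof -
          have "\<not> x < y" for x using lower_cover_exists[of x y] False by blast
          then show ?thesis by (auto simp: order.order_iff_strict)
        qed
        then show ?thesis using False unfolding coef_def by simp
      next
        case True
        let ?p = "par y"
        have cp: "covers ?p y" using parc[OF True] .
        have py: "?p < y" using cp unfolding covers_def by simp
        have "{x. x \<le> y} = insert y {x. x \<le> ?p}"
        proof (intro set_eqI iffI)
          fix x assume "x \<in> {x. x \<le> y}"
          show "x \<in> insert y {x. x \<le> ?p}"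
          proof (cases "x = y")
            case False
            then have "x < y" using \<open>x \<in> _\<close> by auto
            then obtain q where "x \<le> q" "covers q y" using lower_cover_exists by blast
            then have "q = ?p" using cover_unique[OF nc _ cp] by blast
            then show ?thesis using \<open>x \<le> q\<close> by simp
          qed simp
        next
          fix x assume "x \<in> insert y {x. x \<le> ?p}"
          then show "x \<in> {x. x \<le> y}" using py by auto
        qed
        moreover have "y \<notin> {x. x \<le> ?p}" using py by auto
        ultimately have "(\<Sum>x\<in>{x. x \<le> y}. coef x) = coef y + (\<Sum>x\<in>{x. x \<le> ?p}. coef x)"
          by simp
        also have "\<dots> = coef y + f $ ?p" using 1[OF py] by simp
        also have "\<dots> = f $ y" unfolding coef_def using True by simp
        finally show ?thesis .
      qed
    qed
    define cc where "cc v = coef (inv up v)" for v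
    have "f $ y = (\<Sum>x\<in>UNIV. coef x *\<^sub>R up x) $ y" for y
      unfolding up_sum_component key ..
    then have "f = (\<Sum>x\<in>UNIV. coef x *\<^sub>R up x)"
      using vec_eq_iff by blast
    also have "\<dots> = (\<Sum>v\<in>range up. cc v *\<^sub>R v)"
      by (simp add: sum.reindex[OF inj_up] cc_def inv_f_f[OF inj_up])
    finally have fe: "f = (\<Sum>v\<in>range up. cc v *\<^sub>R v)" .
    have "\<forall>v\<in>range up. 0 \<le> cc v" unfolding cc_def using coef_nn by blast
    then show "f \<in> conical_hull (range up)"
      unfolding conical_hull_def using fe by blast
  qed
qed

lemma collider_not_simplicial:
  fixes V :: "(real^('a::{finite,order})) set" and a b c :: 'a
  assumes V: "finite V" "card V = CARD('a)" "independent V" "order_cone = conical_hull V"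
    and col: "a \<noteq> b" "covers a c" "covers b c"
  shows False
proof -
  define W where "W = {u. a \<le> u} \<union> {u. b \<le> u}"
  define S where "S = range (\<lambda>x::'a. {u. x \<le> u}) \<union> {W}"
  have ac: "a \<le> c" "b \<le> c" using col unfolding covers_def by auto
  have upcl: "v \<in> U" if "U \<in> S" "u \<in> U" "u \<le> v" for U u v
    using that unfolding S_def W_def by (auto intro: order_trans)
  have ne: "ind U \<noteq> 0" if "U \<in> S" for U
  proof -
    have "U \<noteq> {}" using that unfolding S_def W_def by auto
    then obtain u where "u \<in> U" by blast
    then have "ind U $ u = 1" unfolding ind_def by simp
    then show ?thesis by auto
  qed
  have extreme: "\<exists>\<mu>. y = \<mu> *\<^sub>R ind U"
    if U: "U \<in> S" and yz: "y \<in> order_cone" "z \<in> order_cone" "y + z = ind U" for U y z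
  proof -
    note E1 = extreme_aux(1)[OF yz] and E2 = extreme_aux(2)[OF yz]
    show ?thesis
    proof (cases "U = W")
      case True
      have "y $ a = y $ c" by (rule E1) (use ac True W_def in auto)
      moreover have "y $ b = y $ c" by (rule E1) (use ac True W_def in auto)
      ultimately have yab: "y $ b = y $ a" by simp
      have "y = (y $ a) *\<^sub>R ind U"
      proof (subst vec_eq_iff, intro allI)
        fix u
        show "y $ u = (y $ a *\<^sub>R ind U) $ u"
        proof (cases "u \<in> U")
          case True
          then have "a \<le> u \<or> b \<le> u" using \<open>U = W\<close> W_def by auto
          then have "y $ u = y $ a"
          proof
            assume "a \<le> u" then show ?thesis using E1[of a u] True \<open>U = W\<close> W_def by auto
          next
            assume "b \<le> u" then show ?thesis using E1[of b u] True \<open>U = W\<close> W_def yab by auto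
          qed
          then show ?thesis using True unfolding ind_def by simp
        next
          case False then show ?thesis using E2[of u] unfolding ind_def by simp
        qed
      qed
      then show ?thesis by blast
    next
      case False
      then obtain x where Ux: "U = {u. x \<le> u}" using U unfolding S_def by auto
      have "y = (y $ x) *\<^sub>R ind U"
      proof (subst vec_eq_iff, intro allI)
        fix u
        show "y $ u = (y $ x *\<^sub>R ind U) $ u"
        proof (cases "u \<in> U")
          case True
          then have "y $ x = y $ u" using E1[of x u] Ux by auto
          then show ?thesis using True unfolding ind_def by simp
        next
          case False then show ?thesis using E2[of u] unfolding ind_def by simp
        qed
      qed
      then show ?thesis by blast
    qed
  qed
  have v0V: "0 \<notin> V" using V(3) dependent_zero by blast
  have rep: "\<exists>v\<in>V. \<exists>l. ind U = l *\<^sub>R v" if U: "U \<in> S" for U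
  proof -
    have "ind U \<in> conical_hull V" using ind_in_cone[of U] upcl[OF U] V(4) by blast
    then obtain cc where e: "ind U = (\<Sum>v\<in>V. cc v *\<^sub>R v)" and nn: "\<forall>v\<in>V. 0 \<le> cc v"
      unfolding conical_hull_def by blast
    obtain v0 where v0: "v0 \<in> V" "cc v0 \<noteq> 0"
    proof (rule ccontr)
      assume "\<not> thesis"
      then have "\<forall>v\<in>V. cc v = 0" using that by blast
      then have "ind U = 0" unfolding e by simp
      then show False using ne[OF U] by simp
    qed
    define y where "y = cc v0 *\<^sub>R v0"
    define z where "z = (\<Sum>v\<in>V. (if v = v0 then 0 else cc v) *\<^sub>R v)"
    have "(\<Sum>v\<in>V. (if v = v0 then cc v0 else 0) *\<^sub>R v) = (\<Sum>v\<in>V. if v = v0 then cc v0 *\<^sub>R v0 else 0)"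
      by (rule sum.cong) auto
    also have "\<dots> = y" using v0 V(1) unfolding y_def by simp
    finally have yeq: "y = (\<Sum>v\<in>V. (if v = v0 then cc v0 else 0) *\<^sub>R v)" by simp
    have "y \<in> conical_hull V" unfolding conical_hull_def yeq using nn v0 by auto
    then have yC: "y \<in> order_cone" using V(4) by simp
    have "z \<in> conical_hull V" unfolding conical_hull_def z_def using nn by auto
    then have zC: "z \<in> order_cone" using V(4) by simp
    have "y + z = (\<Sum>v\<in>V. (if v = v0 then cc v0 else 0) *\<^sub>R v + (if v = v0 then 0 else cc v) *\<^sub>R v)"
      unfolding yeq z_def by (rule sum.distrib[symmetric])
    also have "\<dots> = (\<Sum>v\<in>V. cc v *\<^sub>R v)" by (rule sum.cong) auto
    finally have "y + z = ind U" using e by simp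
    then obtain \<mu> where mu: "y = \<mu> *\<^sub>R ind U" using extreme[OF U yC zC] by blast
    have "v0 \<noteq> 0" using v0 v0V by auto
    then have "y \<noteq> 0" using v0 unfolding y_def by simp
    then have "\<mu> \<noteq> 0" using mu by auto
    then have "ind U = (cc v0 / \<mu>) *\<^sub>R v0" using mu unfolding y_def
      by (metis (no_types, lifting) divide_inverse_commute scaleR_scaleR right_inverse scaleR_one mult.commute)
    then show ?thesis using v0 by blast
  qed
  have sep: "U = U'" if "ind U = l *\<^sub>R v" "ind U' = l' *\<^sub>R v" "ind U \<noteq> 0" "ind U' \<noteq> 0" for U U' l l' v
  proof -
    have l: "l \<noteq> 0" "l' \<noteq> 0" using that by auto
    have "u \<in> U \<longleftrightarrow> u \<in> U'" for u
    proof -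
      have "u \<in> U \<longleftrightarrow> ind U $ u \<noteq> 0" "u \<in> U' \<longleftrightarrow> ind U' $ u \<noteq> 0" unfolding ind_def by auto
      then show ?thesis using that(1,2) l by simp
    qed
    then show ?thesis by blast
  qed
  define g where "g U = (SOME v. v \<in> V \<and> (\<exists>l. ind U = l *\<^sub>R v))" for U
  have g: "g U \<in> V \<and> (\<exists>l. ind U = l *\<^sub>R g U)" if "U \<in> S" for U
  proof -
    have "\<exists>v. v \<in> V \<and> (\<exists>l. ind U = l *\<^sub>R v)" using rep[OF that] by blast
    then show ?thesis unfolding g_def by (rule someI_ex)
  qed
  have "inj_on g S"
  proof (rule inj_onI)
    fix U U' assume "U \<in> S" "U' \<in> S" "g U = g U'"
    then show "U = U'" using g[of U] g[of U'] sep ne by metis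
  qed
  moreover have "g ` S \<subseteq> V" using g by blast
  ultimately have le: "card S \<le> card V" using card_inj_on_le V(1) by blast
  have injup: "inj (\<lambda>x::'a. {u. x \<le> u})"
    by (rule injI) (auto simp: set_eq_iff intro: order.antisym)
  have "W \<notin> range (\<lambda>x::'a. {u. x \<le> u})"
  proof
    assume "W \<in> range (\<lambda>x::'a. {u. x \<le> u})"
    then obtain x where x: "W = {u. x \<le> u}" by blast
    have "x \<le> a" "x \<le> b" using x unfolding W_def by (auto simp: set_eq_iff)
    moreover have "a \<le> x \<or> b \<le> x" using x unfolding W_def by (auto simp: set_eq_iff)
    ultimately have "a \<le> b \<or> b \<le> a" using order.antisym by blast
    then have "a < b \<or> b < a" using col(1) by auto
    then show False using col ac unfolding covers_def by blast
  qed
  then have "card S = CARD('a) + 1"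
    unfolding S_def using card_image[OF injup] by simp
  then show False using le V(2) by simp
qed

theorem theorem2:
  shows "simplicial (order_cone :: (real^'a::{finite,order}) set) \<longleftrightarrow> \<not> has_collider TYPE('a)"
proof
  assume "simplicial (order_cone :: (real^'a::{finite,order}) set)"
  then obtain V :: "(real^('a::{finite,order})) set" where V: "finite V" "card V = CARD('a)" "independent V"
    "order_cone = conical_hull V" unfolding simplicial_def by auto
  show "\<not> has_collider TYPE('a)"
  proof
    assume "has_collider TYPE('a)"
    then obtain a b c :: 'a where "a \<noteq> b" "covers a c" "covers b c"
      unfolding has_collider_def by blast
    then show False using collider_not_simplicial[OF V] by blast
  qed
next
  assume nc: "\<not> has_collider TYPE('a)"
  show "simplicial (order_cone :: (real^'a::{finite,order}) set)"
    unfolding simplicial_def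
    by (rule exI[of _ "range up"])
      (simp add: card_image[OF inj_up] up_independent cone_forward[OF nc])
qed

end
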